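(* There exist absolute constants $c_0>0$ and $n_0$ such that for every $n\ge n_0$ for which $\sqrt n$ is an even integer, there exist a read-once DNF formula $f:\{0,1\}^n\to\{0,1\}$ and a probability vector $p\in(0,1)^n$ such that, under unit costs ($c_i=1$ for all $i$), $$\mathsf{OPT}_{\mathcal N}(f,c,p)\ge c_0\sqrt{n}\cdot \mathsf{OPT}_{\mathcal A}(f,c,p).$$
   Context: Stochastic Boolean Function Evaluation (SBFE) setup: $f:\{0,1\}^n\to\{0,1\}$ is a known Boolean function, $c\in\mathbb{R}_{>0}^n$ a cost vector and $p\in(0,1)^n$ a probability vector. The unknown input $x\in\{0,1\}^n$ is random with independent coordinates and $\Pr(x_i=1)=p_i$. The value $x_i$ can only be learned by testing variable $i$, at cost $c_i$. A strategy tests variables sequentially until $f(x)$ is determined, i.e. until $f(x')=f(x)$ for every $x'$ agreeing with $x$ on all tested coordinates. An adaptive strategy is a decision tree (the next test may depend on previous outcomes); a non-adaptive strategy is a fixed permutation of $[n]$, with variables tested in that order until $f(x)$ is determined. $\mathrm{cost}_{c,p}(f,S)$ is the expected total cost of tests performed by $S$ for random $x$. $\mathsf{OPT}_{\mathcal A}(f,c,p)$ (resp. $\mathsf{OPT}_{\mathcal N}(f,c,p)$) is the minimum of $\mathrm{cost}_{c,p}(f,S)$ over all adaptive (resp. non-adaptive) strategies. A DNF formula is a disjunction of terms, each a conjunction of literals; it is read-once if no variable is negated and distinct terms contain disjoint sets of variables. *)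

theory Defs
  imports Complex_Main
begin

text \<open>Inputs x in {0,1}^n are represented by the set of coordinates equal to 1,
  i.e. subsets of {..<n}. A Boolean function is f :: nat set => bool
  (only its values on subsets of {..<n} matter).\<close>

definition inputs :: "nat \<Rightarrow> nat set set" where
  "inputs n = Pow {..<n}"

definition prob_input :: "nat \<Rightarrow> (nat \<Rightarrow> real) \<Rightarrow> nat set \<Rightarrow> real" where
  "prob_input n p x = (\<Prod>i<n. if i \<in> x then p i else 1 - p i)"

definition determined :: "nat \<Rightarrow> (nat set \<Rightarrow> bool) \<Rightarrow> nat set \<Rightarrow> nat set \<Rightarrow> bool" where
  "determined n f T x \<longleftrightarrow> (\<forall>y\<in>inputs n. y \<inter> T = x \<inter> T \<longrightarrow> f y = f x)"

text \<open>Adaptive strategies: decision trees. Node i l r tests variable i and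
  continues with l if x_i = 0 and with r if x_i = 1.\<close>
datatype dtree = Leaf | Node nat dtree dtree

fun tree_ok :: "nat \<Rightarrow> (nat set \<Rightarrow> bool) \<Rightarrow> dtree \<Rightarrow> nat set \<Rightarrow> nat set \<Rightarrow> bool" where
  "tree_ok n f Leaf T x = determined n f T x"
| "tree_ok n f (Node i l r) T x =
     (determined n f T x \<or> (i < n \<and> tree_ok n f (if i \<in> x then r else l) (insert i T) x))"

fun tree_cost :: "(nat \<Rightarrow> real) \<Rightarrow> nat \<Rightarrow> (nat set \<Rightarrow> bool) \<Rightarrow> dtree \<Rightarrow> nat set \<Rightarrow> nat set \<Rightarrow> real" where
  "tree_cost c n f Leaf T x = 0"
| "tree_cost c n f (Node i l r) T x =
     (if determined n f T x then 0
      else c i + tree_cost c n f (if i \<in> x then r else l) (insert i T) x)"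

definition valid_tree :: "nat \<Rightarrow> (nat set \<Rightarrow> bool) \<Rightarrow> dtree \<Rightarrow> bool" where
  "valid_tree n f t \<longleftrightarrow> (\<forall>x\<in>inputs n. tree_ok n f t {} x)"

definition exp_cost_tree :: "nat \<Rightarrow> (nat set \<Rightarrow> bool) \<Rightarrow> (nat \<Rightarrow> real) \<Rightarrow> (nat \<Rightarrow> real) \<Rightarrow> dtree \<Rightarrow> real" where
  "exp_cost_tree n f c p t = (\<Sum>x\<in>inputs n. prob_input n p x * tree_cost c n f t {} x)"

definition OPT_A :: "nat \<Rightarrow> (nat set \<Rightarrow> bool) \<Rightarrow> (nat \<Rightarrow> real) \<Rightarrow> (nat \<Rightarrow> real) \<Rightarrow> real" where
  "OPT_A n f c p = Inf (exp_cost_tree n f c p ` {t. valid_tree n f t})"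

text \<open>Non-adaptive strategies: permutations of [n] given as distinct lists.
  The cost on x is the total cost of the shortest prefix after which f(x) is determined.\<close>
definition perms :: "nat \<Rightarrow> nat list set" where
  "perms n = {\<sigma>. distinct \<sigma> \<and> set \<sigma> = {..<n}}"

definition perm_stop :: "nat \<Rightarrow> (nat set \<Rightarrow> bool) \<Rightarrow> nat list \<Rightarrow> nat set \<Rightarrow> nat" where
  "perm_stop n f \<sigma> x = (LEAST k. determined n f (set (take k \<sigma>)) x)"

definition perm_cost :: "(nat \<Rightarrow> real) \<Rightarrow> nat \<Rightarrow> (nat set \<Rightarrow> bool) \<Rightarrow> nat list \<Rightarrow> nat set \<Rightarrow> real" where
  "perm_cost c n f \<sigma> x = (\<Sum>j<perm_stop n f \<sigma> x. c (\<sigma> ! j))"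

definition exp_cost_perm :: "nat \<Rightarrow> (nat set \<Rightarrow> bool) \<Rightarrow> (nat \<Rightarrow> real) \<Rightarrow> (nat \<Rightarrow> real) \<Rightarrow> nat list \<Rightarrow> real" where
  "exp_cost_perm n f c p \<sigma> = (\<Sum>x\<in>inputs n. prob_input n p x * perm_cost c n f \<sigma> x)"

definition OPT_N :: "nat \<Rightarrow> (nat set \<Rightarrow> bool) \<Rightarrow> (nat \<Rightarrow> real) \<Rightarrow> (nat \<Rightarrow> real) \<Rightarrow> real" where
  "OPT_N n f c p = Inf (exp_cost_perm n f c p ` perms n)"

text \<open>Read-once (monotone) DNF: a nonempty finite family of nonempty, pairwise
  disjoint terms, each term a set of variables in {..<n}.\<close>
definition read_once_dnf :: "nat \<Rightarrow> nat set set \<Rightarrow> bool" where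
  "read_once_dnf n F \<longleftrightarrow> finite F \<and> F \<noteq> {} \<and> (\<forall>T\<in>F. T \<noteq> {} \<and> T \<subseteq> {..<n})
     \<and> (\<forall>S\<in>F. \<forall>T\<in>F. S \<noteq> T \<longrightarrow> S \<inter> T = {})"

definition dnf_eval :: "nat set set \<Rightarrow> nat set \<Rightarrow> bool" where
  "dnf_eval F x \<longleftrightarrow> (\<exists>T\<in>F. T \<subseteq> x)"

end

theory Submission
  imports Defs
begin

lemma pow_prod_sum:
  fixes a b :: "nat \<Rightarrow> real"
  assumes "finite A"
  shows "(\<Sum>x\<in>Pow A. \<Prod>i\<in>A. if i \<in> x then a i else b i) = (\<Prod>i\<in>A. a i + b i)"
proof -
  have "(\<Prod>i\<in>A. if i \<in> x then a i else b i) = (\<Prod>i\<in>x. a i) * (\<Prod>i\<in>A-x. b i)" if "x \<in> Pow A" for x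
  proof -
    have "(\<Prod>i\<in>A. if i \<in> x then a i else b i) = prod a (A \<inter> {i. i\<in>x}) * prod b (A \<inter> - {i. i \<in> x})"
      using assms by (rule prod.If_cases)
    moreover have "A \<inter> {i. i\<in>x} = x" "A \<inter> - {i. i \<in> x} = A - x" using that by auto
    ultimately show ?thesis by simp
  qed
  then show ?thesis using prod_add[OF assms, of a b] by simp
qed

lemma prob_sum1:
  assumes "\<And>i. i < n \<Longrightarrow> 0 \<le> p i"
  shows "(\<Sum>x\<in>inputs n. prob_input n p x) = 1"
  unfolding inputs_def prob_input_def
  using pow_prod_sum[of "{..<n}" p "\<lambda>i. 1 - p i"] by simp

lemma prob_good:
  assumes "G \<subseteq> {..<n}"
  shows "(\<Sum>x\<in>inputs n. if G \<subseteq> x then prob_input n p x else 0) = (\<Prod>i\<in>G. p i)"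
proof -
  let ?b = "\<lambda>i. if i \<in> G then 0 else 1 - p i"
  have "(if G \<subseteq> x then prob_input n p x else 0) = (\<Prod>i<n. if i \<in> x then p i else ?b i)" if "x \<in> inputs n" for x
  proof (cases "G \<subseteq> x")
    case True
    then show ?thesis unfolding prob_input_def by (auto intro!: prod.cong)
  next
    case False
    then obtain i where i: "i \<in> G" "i \<notin> x" by auto
    then have "i \<in> {..<n}" using assms by auto
    then have "(\<Prod>i<n. if i \<in> x then p i else ?b i) = 0"
      using i by (intro prod_zero) auto
    then show ?thesis using False by simp
  qed
  then have "(\<Sum>x\<in>inputs n. if G \<subseteq> x then prob_input n p x else 0) = (\<Sum>x\<in>Pow {..<n}. \<Prod>i<n. if i \<in> x then p i else ?b i)"
    unfolding inputs_def by (intro sum.cong) (auto simp: inputs_def)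
  also have "\<dots> = (\<Prod>i<n. p i + ?b i)" by (rule pow_prod_sum) simp
  also have "\<dots> = (\<Prod>i<n. if i \<in> G then p i else 1)" by (intro prod.cong) auto
  also have "\<dots> = (\<Prod>i\<in>G. p i)"
  proof -
    have "{x. x < n \<and> x \<in> G} = G" using assms by auto
    then show ?thesis by (simp add: prod.If_cases Int_def)
  qed
  finally show ?thesis .
qed

fun chain :: "nat list \<Rightarrow> dtree \<Rightarrow> dtree" where
  "chain [] nx = Leaf" | "chain (v#vs) nx = Node v nx (chain vs nx)"
fun build :: "nat list list \<Rightarrow> dtree" where
  "build [] = Leaf" | "build (ts#rest) = chain ts (build rest)"
fun plen :: "dtree \<Rightarrow> nat set \<Rightarrow> nat" where
  "plen Leaf x = 0" | "plen (Node i l r) x = Suc (plen (if i\<in>x then r else l) x)"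

lemma cost_le_plen: "tree_cost (\<lambda>_. 1) n f t T x \<le> real (plen t x)"
  by (induction t arbitrary: T) auto

lemma cost_nonneg: "0 \<le> tree_cost (\<lambda>_. 1) n f t T x"
  by (induction t arbitrary: T) auto

lemma plen_chain_le: "plen (chain vs nx) x \<le> length vs + plen nx x"
  by (induction vs) auto

lemma plen_chain_sub: "set vs \<subseteq> x \<Longrightarrow> plen (chain vs nx) x = length vs"
  by (induction vs) auto

lemma plen_build_le: "plen (build rest) x \<le> sum_list (map length rest)"
proof (induction rest)
  case (Cons ts rest)
  then show ?case using plen_chain_le[of ts "build rest" x] by simp
qed simp

lemma plen_build_good:
  assumes "\<forall>ts\<in>set rest. ts \<noteq> [] \<and> length ts \<le> K \<and> set (tl ts) \<subseteq> x"
  shows "plen (build rest) x \<le> length rest + K"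
  using assms
proof (induction rest)
  case (Cons ts rest)
  then obtain v ws where ts: "ts = v # ws" by (cases ts) auto
  show ?case
  proof (cases "v \<in> x")
    case True
    then have "set ts \<subseteq> x" using Cons.prems ts by auto
    then show ?thesis using plen_chain_sub[of ts x] Cons.prems by simp
  next
    case False
    then show ?thesis using Cons ts by simp
  qed
qed simp

lemma chain_ok:
  assumes "C - set vs \<subseteq> T \<inter> x" "set vs \<subseteq> C" "C \<in> F" "\<forall>v\<in>set vs. v < n"
    "\<And>T'. T \<subseteq> T' \<Longrightarrow> (\<exists>v\<in>C\<inter>T'. v\<notin>x) \<Longrightarrow> tree_ok n (dnf_eval F) nx T' x"
  shows "tree_ok n (dnf_eval F) (chain vs nx) T x"
  using assms
proof (induction vs arbitrary: T)
  case Nil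
  then have "C \<subseteq> T \<inter> x" by simp
  then show ?case using Nil.prems(3)
    by (auto simp: determined_def dnf_eval_def)
next
  case (Cons v vs)
  show ?case
  proof (cases "v \<in> x")
    case True
    have "tree_ok n (dnf_eval F) (chain vs nx) (insert v T) x"
      by (rule Cons.IH) (use Cons.prems True in auto)
    then show ?thesis using True Cons.prems by simp
  next
    case False
    have "tree_ok n (dnf_eval F) nx (insert v T) x"
      by (rule Cons.prems(5)) (use Cons.prems False in auto)
    then show ?thesis using False Cons.prems by simp
  qed
qed

lemma build_ok:
  assumes "\<forall>C\<in>F. C \<notin> set (map set rest) \<longrightarrow> (\<exists>v\<in>C\<inter>T. v\<notin>x)"
    "set (map set rest) \<subseteq> F" "\<forall>ts\<in>set rest. \<forall>v\<in>set ts. v < n"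
  shows "tree_ok n (dnf_eval F) (build rest) T x"
  using assms
proof (induction rest arbitrary: T)
  case Nil
  have "\<not> dnf_eval F y" if "y \<inter> T = x \<inter> T" for y
    using Nil.prems(1) that unfolding dnf_eval_def by fastforce
  moreover have "\<not> dnf_eval F x" using Nil.prems(1) unfolding dnf_eval_def by fastforce
  ultimately show ?case by (auto simp: determined_def)
next
  case (Cons ts rest)
  show ?case unfolding build.simps
  proof (rule chain_ok[where C = "set ts"])
    fix T' assume TT: "T \<subseteq> T'" and z: "\<exists>v\<in>set ts \<inter> T'. v \<notin> x"
    show "tree_ok n (dnf_eval F) (build rest) T' x"
    proof (rule Cons.IH)
      show "\<forall>C\<in>F. C \<notin> set (map set rest) \<longrightarrow> (\<exists>v\<in>C \<inter> T'. v \<notin> x)"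
      proof (intro ballI impI)
        fix C assume "C \<in> F" "C \<notin> set (map set rest)"
        then show "\<exists>v\<in>C \<inter> T'. v \<notin> x"
          using Cons.prems(1) z TT by (cases "C = set ts") auto
      qed
    qed (use Cons.prems in auto)
  qed (use Cons.prems in auto)
qed


definition LL :: "nat \<Rightarrow> nat list list" where
  "LL k = map (\<lambda>j. [j*k..<j*k+k]) [0..<k]"
definition FF :: "nat \<Rightarrow> nat set set" where
  "FF k = set (map set (LL k))"
definition pp :: "nat \<Rightarrow> nat \<Rightarrow> real" where
  "pp k i = (if i mod k = 0 then 1/(2*real k) else 1 - 1/(real k)^4)"
definition Fill :: "nat \<Rightarrow> nat set" where
  "Fill k = {i. i < k*k \<and> i mod k \<noteq> 0}"

lemma FF_eq: "FF k = (\<lambda>j. {j*k..<j*k+k}) ` {..<k}"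
  unfolding FF_def LL_def by auto

lemma blk_div:
  assumes "0 < (k::nat)"
  shows "i \<in> {j*k..<j*k+k} \<longleftrightarrow> i div k = j"
proof
  assume "i \<in> {j*k..<j*k+k}"
  then show "i div k = j"
    by (intro div_nat_eqI) (auto simp: mult.commute)
next
  assume h: "i div k = j"
  have "i div k * k \<le> i" by (rule div_times_less_eq_dividend)
  moreover have "i < k + i div k * k" using assms by (rule dividend_less_div_times)
  ultimately show "i \<in> {j*k..<j*k+k}" using h by auto
qed

lemma blk_sub:
  fixes j k :: nat
  assumes "j < k"
  shows "{j*k..<j*k+k} \<subseteq> {..<k*k}"
proof -
  have "j*k + k = Suc j * k" by simp
  also have "\<dots> \<le> k*k" using assms by (intro mult_le_mono1) simp
  finally have "j*k + k \<le> k*k" .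
  then show ?thesis by auto
qed

lemma read_once:
  assumes "0 < k"
  shows "read_once_dnf (k*k) (FF k)"
  unfolding read_once_dnf_def FF_eq
proof (intro conjI ballI impI)
  show "(\<lambda>j. {j * k..<j * k + k}) ` {..<k} \<noteq> {}" using assms by auto
next
  fix T assume "T \<in> (\<lambda>j. {j * k..<j * k + k}) ` {..<k}"
  then obtain j where "j < k" "T = {j * k..<j * k + k}" by auto
  then show "T \<noteq> {}" "T \<subseteq> {..<k*k}" using assms blk_sub by auto
next
  fix S T assume S: "S \<in> (\<lambda>j. {j * k..<j * k + k}) ` {..<k}" and T: "T \<in> (\<lambda>j. {j * k..<j * k + k}) ` {..<k}"
    and ne: "S \<noteq> T"
  from S obtain j where j: "S = {j * k..<j * k + k}" by auto
  from T obtain j' where j': "T = {j' * k..<j' * k + k}" by auto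
  show "S \<inter> T = {}"
  proof (rule ccontr)
    assume "S \<inter> T \<noteq> {}"
    then obtain i where "i \<in> S" "i \<in> T" by auto
    then have "j = j'" using blk_div[OF assms] j j' by metis
    then show False using ne j j' by simp
  qed
qed (simp)

lemma valid:
  assumes "0 < k"
  shows "valid_tree (k*k) (dnf_eval (FF k)) (build (LL k))"
  unfolding valid_tree_def
proof
  fix x assume "x \<in> inputs (k*k)"
  show "tree_ok (k * k) (dnf_eval (FF k)) (build (LL k)) {} x"
  proof (rule build_ok)
    show "\<forall>ts\<in>set (LL k). \<forall>v\<in>set ts. v < k * k"
      unfolding LL_def using blk_sub by fastforce
  qed (auto simp: FF_def)
qed

lemma plen_good:
  assumes "0 < k" "Fill k \<subseteq> x"
  shows "plen (build (LL k)) x \<le> 2*k"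
proof -
  have "plen (build (LL k)) x \<le> length (LL k) + k"
  proof (rule plen_build_good)
    show "\<forall>ts\<in>set (LL k). ts \<noteq> [] \<and> length ts \<le> k \<and> set (tl ts) \<subseteq> x"
    proof
      fix ts assume "ts \<in> set (LL k)"
      then obtain j where j: "j < k" "ts = [j*k..<j*k+k]" unfolding LL_def by auto
      have "set (tl ts) \<subseteq> Fill k"
      proof
        fix i assume "i \<in> set (tl ts)"
        then have i: "j*k < i" "i < j*k+k" using j by auto
        then have "i \<in> {j*k..<j*k+k}" by auto
        then have "i < k*k" using blk_sub[OF j(1)] by auto
        moreover have "i mod k \<noteq> 0"
        proof
          assume "i mod k = 0"
          then have "i = (i div k) * k" by (metis div_mult_mod_eq add_0_right)
          moreover have "i div k = j" using blk_div[OF assms(1), of i j] i by simp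
          ultimately show False using i by simp
        qed
        ultimately show "i \<in> Fill k" by (simp add: Fill_def)
      qed
      then show "ts \<noteq> [] \<and> length ts \<le> k \<and> set (tl ts) \<subseteq> x" using j assms by auto
    qed
  qed
  then show ?thesis by (simp add: LL_def)
qed

lemma plen_all: "plen (build (LL k)) x \<le> k*k"
proof -
  have "sum_list (map length (LL k)) = k*k"
    unfolding LL_def by (simp add: comp_def sum_list_triv)
  then show ?thesis using plen_build_le[of "LL k" x] by simp
qed

lemma pp_range:
  assumes "2 \<le> k" "i < k*k"
  shows "0 < pp k i \<and> pp k i < 1"
proof -
  have "(2::real)^4 \<le> real k ^ 4" using assms by (intro power_mono) auto
  then have "real k ^ 4 > 1" by simp
  then have "0 < 1/(real k)^4" "1/(real k)^4 < 1"
    using assms by (auto intro: divide_pos_pos simp del: of_nat_power simp add: divide_less_eq)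
  moreover have "0 < 1/(2*real k)" "1/(2*real k) < 1" using assms by auto
  ultimately show ?thesis unfolding pp_def by auto
qed


lemma prob_nonneg:
  assumes "2 \<le> k"
  shows "0 \<le> prob_input (k*k) (pp k) x"
  unfolding prob_input_def
  using pp_range[OF assms] by (intro prod_nonneg) (auto simp: less_imp_le)

lemma good_prob:
  assumes "2 \<le> k"
  shows "1 - 1/(real (k*k)) \<le> (\<Prod>i\<in>Fill k. pp k i)"
proof -
  let ?d = "1/(real k)^4"
  have d: "0 < ?d" "?d < 1" using pp_range[OF assms, of 1] assms
    unfolding pp_def by (auto split: if_splits)
  have "(\<Prod>i\<in>Fill k. pp k i) = (\<Prod>i\<in>Fill k. 1 - ?d)"
    by (intro prod.cong) (auto simp: Fill_def pp_def)
  also have "\<dots> = (1 - ?d) ^ card (Fill k)" by simp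
  also have "\<dots> \<ge> (1 - ?d) ^ (k*k)"
  proof (rule power_decreasing)
    show "card (Fill k) \<le> k*k"
      using card_mono[of "{..<k*k}" "Fill k"] by (auto simp: Fill_def)
  qed (use d in auto)
  moreover have "(1 - ?d) ^ (k*k) \<ge> 1 + real (k*k) * (- ?d)"
    using Bernoulli_inequality[of "- ?d" "k*k"] d by simp
  moreover have "real (k*k) * ?d = 1/real (k*k)"
    using assms by (simp add: power4_eq_xxxx)
  ultimately show ?thesis by simp
qed

lemma optA:
  assumes "2 \<le> k"
  shows "OPT_A (k*k) (dnf_eval (FF k)) (\<lambda>_. 1) (pp k) \<le> 2*real k+1"
proof -
  let ?n = "k*k" and ?f = "dnf_eval (FF k)" and ?t = "build (LL k)"
  let ?P = "\<lambda>x. prob_input ?n (pp k) x"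
  let ?C = "\<lambda>x. tree_cost (\<lambda>_. 1) ?n ?f ?t {} x"
  have k0: "0 < k" using assms by simp
  have "OPT_A ?n ?f (\<lambda>_. 1) (pp k) \<le> exp_cost_tree ?n ?f (\<lambda>_. 1) (pp k) ?t"
    unfolding OPT_A_def
  proof (rule cInf_lower)
    show "exp_cost_tree ?n ?f (\<lambda>_. 1) (pp k) ?t \<in> exp_cost_tree ?n ?f (\<lambda>_. 1) (pp k) ` {t. valid_tree ?n ?f t}"
      using valid[OF k0] by auto
    show "bdd_below (exp_cost_tree ?n ?f (\<lambda>_. 1) (pp k) ` {t. valid_tree ?n ?f t})"
      by (rule bdd_belowI[of _ 0]) (auto simp: exp_cost_tree_def
          intro!: sum_nonneg mult_nonneg_nonneg prob_nonneg[OF assms] cost_nonneg)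
  qed
  also have "exp_cost_tree ?n ?f (\<lambda>_. 1) (pp k) ?t \<le>
      (\<Sum>x\<in>inputs ?n. 2*real k * ?P x + real ?n * (?P x - (if Fill k \<subseteq> x then ?P x else 0)))"
    unfolding exp_cost_tree_def
  proof (rule sum_mono)
    fix x
    have Pn: "0 \<le> ?P x" by (rule prob_nonneg[OF assms])
    have c1: "?C x \<le> real ?n" using cost_le_plen[of ?n ?f ?t "{}" x] plen_all[of k x]
      by (metis of_nat_le_iff order_trans)
    show "?P x * ?C x \<le> 2*real k * ?P x + real ?n * (?P x - (if Fill k \<subseteq> x then ?P x else 0))"
    proof (cases "Fill k \<subseteq> x")
      case True
      have "?C x \<le> 2 * real k" using cost_le_plen[of ?n ?f ?t "{}" x] plen_good[OF k0 True]
        by (metis of_nat_le_iff order_trans of_nat_mult of_nat_numeral)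
      then have "?P x * ?C x \<le> ?P x * (2 * real k)" using Pn by (rule mult_left_mono)
      then show ?thesis using True Pn by (simp add: mult.commute)
    next
      case False
      have "?P x * ?C x \<le> ?P x * real ?n" using c1 Pn by (rule mult_left_mono)
      moreover have "0 \<le> 2*real k * ?P x" using Pn by simp
      ultimately show ?thesis using False by (simp add: mult.commute)
    qed
  qed
  also have "\<dots> = 2*real k * (\<Sum>x\<in>inputs ?n. ?P x) + real ?n * ((\<Sum>x\<in>inputs ?n. ?P x)
        - (\<Sum>x\<in>inputs ?n. if Fill k \<subseteq> x then ?P x else 0))"
    by (simp add: sum.distrib sum_distrib_left[symmetric] sum_subtractf)
  also have "\<dots> = 2*real k + real ?n * (1 - (\<Prod>i\<in>Fill k. pp k i))"
  proof -
    have "(\<Sum>x\<in>inputs ?n. ?P x) = 1"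
      by (rule prob_sum1) (use pp_range[OF assms] in \<open>auto simp: less_imp_le\<close>)
    moreover have "(\<Sum>x\<in>inputs ?n. if Fill k \<subseteq> x then ?P x else 0) = (\<Prod>i\<in>Fill k. pp k i)"
      by (rule prob_good) (auto simp: Fill_def)
    ultimately show ?thesis by simp
  qed
  also have "\<dots> \<le> 2*real k + 1"
  proof -
    have "real ?n * (1 - (\<Prod>i\<in>Fill k. pp k i)) \<le> real ?n * (1/real ?n)"
      using good_prob[OF assms] by (intro mult_left_mono) auto
    also have "\<dots> = 1" using k0 by simp
    finally show ?thesis by simp
  qed
  finally show ?thesis .
qed


definition XX :: "nat \<Rightarrow> nat \<Rightarrow> nat set" where
  "XX k j = Fill k \<union> {j*k}"

lemma blk_mod:
  fixes i j k :: nat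
  assumes "0 < k" "i \<in> {j*k..<j*k+k}" "i \<noteq> j*k"
  shows "i mod k \<noteq> 0"
proof
  assume "i mod k = 0"
  then have "i = (i div k) * k" using div_mult_mod_eq[of i k] by simp
  moreover have "i div k = j" using blk_div[OF assms(1)] assms(2) by simp
  ultimately show False using assms(3) by simp
qed

lemma XX_sub: assumes "j < k" shows "XX k j \<subseteq> {..<k*k}"
  using blk_sub[OF assms] assms by (auto simp: XX_def Fill_def)

lemma blk_XX: assumes "0 < k" "j < k" shows "{j*k..<j*k+k} \<subseteq> XX k j"
proof
  fix i assume i: "i \<in> {j*k..<j*k+k}"
  show "i \<in> XX k j"
  proof (cases "i = j*k")
    case False
    then have "i mod k \<noteq> 0" using blk_mod[OF assms(1) i] by simp
    moreover have "i < k*k" using blk_sub[OF assms(2)] i by auto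
    ultimately show ?thesis by (simp add: XX_def Fill_def)
  qed (simp add: XX_def)
qed

lemma det_blk:
  assumes "0 < k" "j < k" "determined (k*k) (dnf_eval (FF k)) S (XX k j)"
  shows "{j*k..<j*k+k} \<subseteq> S"
proof (rule ccontr)
  assume "\<not> {j*k..<j*k+k} \<subseteq> S"
  then obtain v where v: "v \<in> {j*k..<j*k+k}" "v \<notin> S" by blast
  let ?y = "XX k j \<inter> S"
  have yin: "?y \<in> inputs (k*k)" using XX_sub[OF assms(2)] by (auto simp: inputs_def)
  have "?y \<inter> S = XX k j \<inter> S" by auto
  then have eq: "dnf_eval (FF k) ?y = dnf_eval (FF k) (XX k j)"
    using assms(3) yin unfolding determined_def by blast
  have "dnf_eval (FF k) (XX k j)"
    unfolding dnf_eval_def FF_eq using blk_XX[OF assms(1,2)] assms(2) by blast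
  moreover have "\<not> dnf_eval (FF k) ?y"
    unfolding dnf_eval_def FF_eq
  proof
    assume "\<exists>T\<in>(\<lambda>j. {j * k..<j * k + k}) ` {..<k}. T \<subseteq> ?y"
    then obtain j' where j': "j' < k" "{j' * k..<j' * k + k} \<subseteq> ?y" by auto
    show False
    proof (cases "j' = j")
      case True then show False using j' v by auto
    next
      case False
      have "j'*k \<in> ?y" using j' assms(1) by auto
      moreover have "j'*k \<noteq> j*k" using False assms(1) by simp
      ultimately show False by (simp add: XX_def Fill_def)
    qed
  qed
  ultimately show False using eq by simp
qed

lemma prob_XX:
  assumes "2 \<le> k" "j < k"
  shows "1/(8*real k) \<le> prob_input (k*k) (pp k) (XX k j)"
proof -
  let ?q = "1/(2*real k)" and ?d = "1/(real k)^4"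
  let ?A = "{..<k*k}" and ?g = "\<lambda>i. if i \<in> XX k j then pp k i else 1 - pp k i"
  have k0: "0 < k" using assms by simp
  have d: "0 < ?d" "?d < 1" using pp_range[OF assms(1), of 1] assms
    unfolding pp_def by (auto split: if_splits)
  have q: "0 < ?q" "?q < 1" using assms by auto
  have jk: "j*k \<in> ?A" using blk_sub[OF assms(2)] k0 assms(2) by auto
  have "prob_input (k*k) (pp k) (XX k j) = ?g (j*k) * prod ?g (?A - {j*k})"
    unfolding prob_input_def by (rule prod.remove[OF finite_lessThan jk])
  also have "?g (j*k) = ?q" by (simp add: XX_def pp_def)
  also have "prod ?g (?A - {j*k}) = (\<Prod>i\<in>?A - {j*k}. if i mod k = 0 then 1 - ?q else 1 - ?d)"
    by (intro prod.cong) (auto simp: XX_def Fill_def pp_def)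
  also have "\<dots> = (1 - ?q) ^ card ((?A - {j*k}) \<inter> {i. i mod k = 0}) * (1 - ?d) ^ card ((?A - {j*k}) \<inter> - {i. i mod k = 0})"
    by (simp add: prod.If_cases)
  finally have eq: "prob_input (k*k) (pp k) (XX k j) = ?q * ((1 - ?q) ^ card ((?A - {j*k}) \<inter> {i. i mod k = 0}) * (1 - ?d) ^ card ((?A - {j*k}) \<inter> - {i. i mod k = 0}))" .
  have c1: "card ((?A - {j*k}) \<inter> {i. i mod k = 0}) \<le> k"
  proof -
    have "(?A - {j*k}) \<inter> {i. i mod k = 0} \<subseteq> (\<lambda>j. j*k) ` {..<k}"
    proof
      fix i assume i: "i \<in> (?A - {j*k}) \<inter> {i. i mod k = 0}"
      then have "i mod k = 0" by simp
      then have "i = (i div k) * k" using div_mult_mod_eq[of i k] by simp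
      moreover have "i div k < k" using i by (auto simp: less_mult_imp_div_less)
      ultimately show "i \<in> (\<lambda>j. j*k) ` {..<k}" by blast
    qed
    then have "card ((?A - {j*k}) \<inter> {i. i mod k = 0}) \<le> card ((\<lambda>j. j*k) ` {..<k})"
      by (intro card_mono) auto
    also have "\<dots> \<le> k" using card_image_le[of "{..<k}" "\<lambda>j. j*k"] by simp
    finally show ?thesis .
  qed
  have c2: "card ((?A - {j*k}) \<inter> - {i. i mod k = 0}) \<le> k*k"
    using card_mono[of ?A "(?A - {j*k}) \<inter> - {i. i mod k = 0}"] by auto
  have p1: "(1 - ?q) ^ card ((?A - {j*k}) \<inter> {i. i mod k = 0}) \<ge> (1 - ?q) ^ k"
    by (rule power_decreasing[OF c1]) (use q in auto)
  have p2: "(1 - ?d) ^ card ((?A - {j*k}) \<inter> - {i. i mod k = 0}) \<ge> (1 - ?d) ^ (k*k)"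
    by (rule power_decreasing[OF c2]) (use d in auto)
  have b1: "(1 - ?q) ^ k \<ge> 1/2"
  proof -
    have BI: "1 + real k * (- ?q) \<le> (1 + - ?q) ^ k"
      by (rule Bernoulli_inequality) (use q in linarith)
    have e1: "real k * ?q = 1/2" using k0 by (simp add: field_simps)
    have e2: "1 + - ?q = 1 - ?q" by simp
    show ?thesis using BI e1 unfolding e2 by linarith
  qed
  have b2: "(1 - ?d) ^ (k*k) \<ge> 1/2"
  proof -
    have A: "(1 - ?d) ^ (k*k) \<ge> 1 + real (k*k) * (- ?d)"
      using Bernoulli_inequality[of "- ?d" "k*k"] d by simp
    have B: "real (k*k) * ?d = 1/real (k*k)"
      using k0 by (simp add: field_simps power4_eq_xxxx)
    have "4 \<le> k*k" using mult_le_mono[OF assms(1) assms(1)] by simp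
    then have "real (k*k) \<ge> 4" by (metis of_nat_le_iff of_nat_numeral)
    then have D: "1/real (k*k) \<le> 1/2" by (simp add: divide_simps)
    show ?thesis using A B D by linarith
  qed
  have "(1 - ?q) ^ card ((?A - {j*k}) \<inter> {i. i mod k = 0}) * (1 - ?d) ^ card ((?A - {j*k}) \<inter> - {i. i mod k = 0}) \<ge> (1/2) * (1/2)"
    using p1 p2 b1 b2 by (intro mult_mono) auto
  then have "prob_input (k*k) (pp k) (XX k j) \<ge> ?q * (1/4)"
    unfolding eq using q by (intro mult_left_mono) auto
  then show ?thesis by simp
qed


lemma optN:
  assumes "2 \<le> k" "even k"
  shows "real k^2/32 \<le> OPT_N (k*k) (dnf_eval (FF k)) (\<lambda>_. 1) (pp k)"
  unfolding OPT_N_def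
proof (rule cINF_greatest)
  show "perms (k*k) \<noteq> {}" unfolding perms_def
    by (metis (mono_tags, lifting) atLeast_upt distinct_upt empty_iff mem_Collect_eq)
next
  fix \<sigma> assume \<sigma>: "\<sigma> \<in> perms (k*k)"
  let ?n = "k*k" and ?f = "dnf_eval (FF k)"
  let ?P = "\<lambda>x. prob_input ?n (pp k) x"
  let ?ps = "\<lambda>x. perm_stop ?n ?f \<sigma> x"
  have k0: "0 < k" using assms by simp
  obtain h where h: "k = 2*h" using assms(2) by (metis evenE)
  define m where "m = k*h"
  define S where "S = set (take m \<sigma>)"
  have setsig: "set \<sigma> = {..<?n}" using \<sigma> by (simp add: perms_def)
  have stop: "m \<le> ?ps (XX k j)" if j: "j < k" "\<not> {j*k..<j*k+k} \<subseteq> S" for j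
  proof (rule ccontr)
    assume "\<not> m \<le> ?ps (XX k j)"
    then have lt: "?ps (XX k j) \<le> m" by simp
    have ex: "determined ?n ?f (set (take (length \<sigma>) \<sigma>)) (XX k j)"
      unfolding determined_def
    proof (intro ballI impI)
      fix y assume y: "y \<in> inputs ?n" "y \<inter> set (take (length \<sigma>) \<sigma>) = XX k j \<inter> set (take (length \<sigma>) \<sigma>)"
      then have "y = XX k j" using setsig XX_sub[OF j(1)] by (simp add: inputs_def Int_absorb2)
      then show "?f y = ?f (XX k j)" by simp
    qed
    have "determined ?n ?f (set (take (?ps (XX k j)) \<sigma>)) (XX k j)"
      unfolding perm_stop_def by (rule LeastI[of _ "length \<sigma>"]) (rule ex)
    then have "{j*k..<j*k+k} \<subseteq> set (take (?ps (XX k j)) \<sigma>)" by (rule det_blk[OF k0 j(1)])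
    also have "\<dots> \<subseteq> S" unfolding S_def by (rule set_take_subset_set_take[OF lt])
    finally show False using j(2) by simp
  qed
  define Full where "Full = {j\<in>{..<k}. {j*k..<j*k+k} \<subseteq> S}"
  define J where "J = {..<k} - Full"
  have cardS: "card S \<le> m" unfolding S_def
    using card_length[of "take m \<sigma>"] by simp
  have "card Full * k = (\<Sum>j\<in>Full. card {j*k..<j*k+k})" by simp
  also have "\<dots> = card (\<Union>j\<in>Full. {j*k..<j*k+k})"
  proof (rule card_UN_disjoint[symmetric])
    show "finite Full" unfolding Full_def by simp
  next
    show "\<forall>i\<in>Full. \<forall>j\<in>Full. i \<noteq> j \<longrightarrow> {i*k..<i*k+k} \<inter> {j*k..<j*k+k} = {}"
    proof (intro ballI impI)
      fix i j :: nat assume "i \<noteq> j"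
      show "{i*k..<i*k+k} \<inter> {j*k..<j*k+k} = {}"
      proof (rule ccontr)
        assume "{i*k..<i*k+k} \<inter> {j*k..<j*k+k} \<noteq> {}"
        then obtain x where x: "x \<in> {i*k..<i*k+k}" "x \<in> {j*k..<j*k+k}" by blast
        then have "x div k = i" "x div k = j" using blk_div[OF k0] by blast+
        then show False using \<open>i \<noteq> j\<close> by simp
      qed
    qed
  qed simp
  also have "\<dots> \<le> card S"
    by (rule card_mono) (auto simp: S_def Full_def)
  finally have "card Full * k \<le> card S" .
  then have "card Full * k \<le> h * k" using cardS unfolding m_def by (metis le_trans mult.commute)
  then have cF: "card Full \<le> h" using k0 by simp
  have cJ: "h \<le> card J"
  proof -
    have "card J = k - card Full" unfolding J_def
      by (subst card_Diff_subset) (auto simp: Full_def)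
    then show ?thesis using cF h by simp
  qed
  have nonneg: "0 \<le> ?P x * perm_cost (\<lambda>_. 1) ?n ?f \<sigma> x" for x
    using prob_nonneg[OF assms(1)] by (simp add: perm_cost_def)
  have inj: "inj_on (XX k) {..<k}"
  proof
    fix i j :: nat assume ij: "i \<in> {..<k}" "j \<in> {..<k}" "XX k i = XX k j"
    have "i*k \<in> XX k i" by (simp add: XX_def)
    then have "i*k \<in> XX k j" using ij(3) by simp
    then have "i*k = j*k" by (auto simp: XX_def Fill_def)
    then show "i = j" using k0 by simp
  qed
  have "(\<Sum>j\<in>J. (1/(8*real k)) * real m) \<le> (\<Sum>j\<in>J. ?P (XX k j) * perm_cost (\<lambda>_. 1) ?n ?f \<sigma> (XX k j))"
  proof (rule sum_mono)
    fix j assume "j \<in> J"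
    then have j: "j < k" "\<not> {j*k..<j*k+k} \<subseteq> S" unfolding J_def Full_def by auto
    have "real m \<le> perm_cost (\<lambda>_. 1) ?n ?f \<sigma> (XX k j)"
      using stop[OF j] by (simp add: perm_cost_def)
    then show "(1/(8*real k)) * real m \<le> ?P (XX k j) * perm_cost (\<lambda>_. 1) ?n ?f \<sigma> (XX k j)"
      using prob_XX[OF assms(1) j(1)] prob_nonneg[OF assms(1)] by (intro mult_mono) auto
  qed
  also have "\<dots> \<le> (\<Sum>j\<in>{..<k}. ?P (XX k j) * perm_cost (\<lambda>_. 1) ?n ?f \<sigma> (XX k j))"
    by (rule sum_mono2) (auto simp: J_def nonneg)
  also have "\<dots> = (\<Sum>x\<in>XX k ` {..<k}. ?P x * perm_cost (\<lambda>_. 1) ?n ?f \<sigma> x)"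
    by (rule sum.reindex[OF inj, symmetric, unfolded comp_def])
  also have "\<dots> \<le> (\<Sum>x\<in>inputs ?n. ?P x * perm_cost (\<lambda>_. 1) ?n ?f \<sigma> x)"
    by (rule sum_mono2) (use XX_sub in \<open>auto simp: inputs_def nonneg\<close>)
  also have "\<dots> = exp_cost_perm ?n ?f (\<lambda>_. 1) (pp k) \<sigma>" by (simp add: exp_cost_perm_def)
  finally have L: "real (card J) * ((1/(8*real k)) * real m) \<le> exp_cost_perm ?n ?f (\<lambda>_. 1) (pp k) \<sigma>"
    by simp
  have "real h * ((1/(8*real k)) * real m) \<le> real (card J) * ((1/(8*real k)) * real m)"
    using cJ by (intro mult_right_mono) auto
  moreover have "real h * ((1/(8*real k)) * real m) = real k^2/32"
    using k0 unfolding m_def h by (simp add: field_simps power2_eq_square)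
  ultimately show "real k^2/32 \<le> exp_cost_perm ?n ?f (\<lambda>_. 1) (pp k) \<sigma>" using L by linarith
qed

theorem theorem4:
  shows "\<exists>c0::real. c0 > 0 \<and> (\<exists>n0::nat. \<forall>n\<ge>n0. (\<exists>k::nat. even k \<and> n = k\<^sup>2) \<longrightarrow>
     (\<exists>F p. read_once_dnf n F \<and> (\<forall>i<n. 0 < p i \<and> p i < 1) \<and>
        OPT_N n (dnf_eval F) (\<lambda>_. 1) p \<ge> c0 * sqrt (real n) * OPT_A n (dnf_eval F) (\<lambda>_. 1) p))"
proof (intro exI[of _ "1/96"] conjI exI[of _ 4] allI impI)
  fix n :: nat assume n4: "4 \<le> n" and "\<exists>k. even k \<and> n = k\<^sup>2"
  then obtain k where k: "even k" "n = k\<^sup>2" by blast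
  have nk: "n = k*k" using k by (simp add: power2_eq_square)
  have k2: "2 \<le> k"
  proof (rule ccontr)
    assume "\<not> 2 \<le> k"
    then have "k \<le> 1" by simp
    then have "k*k \<le> 1*1" by (intro mult_le_mono) auto
    then show False using n4 nk by simp
  qed
  have sq: "sqrt (real (k*k)) = real k" by (simp add: real_sqrt_mult_self)
  show "\<exists>F p. read_once_dnf n F \<and> (\<forall>i<n. 0 < p i \<and> p i < 1) \<and>
        OPT_N n (dnf_eval F) (\<lambda>_. 1) p \<ge> 1/96 * sqrt (real n) * OPT_A n (dnf_eval F) (\<lambda>_. 1) p"
  proof (intro exI[of _ "FF k"] exI[of _ "pp k"] conjI allI impI)
    show "read_once_dnf n (FF k)" unfolding nk using k2 by (intro read_once) simp
  next
    fix i assume "i < n"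
    then show "0 < pp k i" "pp k i < 1" using pp_range[OF k2, of i] nk by auto
  next
    have A: "OPT_A (k*k) (dnf_eval (FF k)) (\<lambda>_. 1) (pp k) \<le> 3 * real k"
      using optA[OF k2] k2 by simp
    have "1/96 * real k * OPT_A (k*k) (dnf_eval (FF k)) (\<lambda>_. 1) (pp k) \<le> 1/96 * real k * (3 * real k)"
      using A by (intro mult_left_mono) auto
    also have "\<dots> = real k^2/32" by (simp add: power2_eq_square)
    also have "\<dots> \<le> OPT_N (k*k) (dnf_eval (FF k)) (\<lambda>_. 1) (pp k)" by (rule optN[OF k2 k(1)])
    finally show "1/96 * sqrt (real n) * OPT_A n (dnf_eval (FF k)) (\<lambda>_. 1) (pp k) \<le> OPT_N n (dnf_eval (FF k)) (\<lambda>_. 1) (pp k)"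
      unfolding nk sq .
  qed
qed simp

end
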